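(* Let $\ell$ be a commutative unital ring, $A,B$ (associative, not necessarily unital) $\ell$-algebras, and $n,r,s\geq 0$. Let $C:=B^{\mathfrak{S}_n}_r$ and let $H:A\to C^{\mathrm{sd}^sI}$ be an $\ell$-algebra homomorphism (a homotopy between the two homomorphisms $(d^0)^*\circ H,(d^1)^*\circ H:A\to C$, where $d^0,d^1:\Delta^0=\mathrm{sd}^s\Delta^0\to\mathrm{sd}^sI$ are induced by the two vertex inclusions of $I=\Delta^1$). Then there exists an $\ell$-algebra homomorphism $\widetilde{H}:A\to\widetilde{B}^{\mathfrak{S}_n}_{r+s}$ such that for $i=0,1$ \[(d^i)^*\circ\widetilde{H}=\tau\circ(d^i)^*\circ H,\] where on the left $(d^i)^*:\widetilde{B}^{\mathfrak{S}_n}_{r+s}\to B^{\mathfrak{S}_n}_{r+s}$ is induced by $\mathrm{id}\times d^i: I^n\cong I^n\times\Delta^0\to I^n\times I$, and $\tau:B^{\mathfrak{S}_n}_r\to B^{\mathfrak{S}_n}_{r+s}$ is the composite of $s$ transition maps of the directed diagram $B^{\mathfrak{S}_n}_\bullet$ (induced by the iterated last vertex map).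
   Context: $\mathbb{Z}^\Delta$ is the simplicial ring $[p]\mapsto \mathbb{Z}[t_0,\dots,t_p]/\langle 1-\sum t_i\rangle$ (an order preserving $\varphi:[p]\to[q]$ acts by $t_i\mapsto\sum_{\varphi(j)=i}t_j$). For an $\ell$-algebra $D$, $D^\Delta$ is the simplicial $\ell$-algebra $[p]\mapsto D\otimes_{\mathbb{Z}}\mathbb{Z}^{\Delta^p}$, and for a simplicial set $X$, $D^X:=\mathrm{Hom}_{\mathbb{S}}(X,D^\Delta)$ with pointwise operations. $\mathrm{sd}$ is the subdivision functor and $\gamma:\mathrm{sd}\to\mathrm{id}$ the last vertex map. For a finite simplicial set $K$ with simplicial subset $L$, $D^{(K,L)}_r:=\ker(D^{\mathrm{sd}^rK}\to D^{\mathrm{sd}^rL})$, and $D^{(K,L)}_\bullet$ is the directed diagram $D^{(K,L)}_0\to D^{(K,L)}_1\to\cdots$ with maps induced by $\gamma_{\mathrm{sd}^rK}:\mathrm{sd}^{r+1}K\to\mathrm{sd}^rK$. $I=\Delta^1$, $\partial I=\{0,1\}$, $I^n$ is the $n$-fold product ($I^0=\Delta^0$), $\partial I^n=\bigcup_j I\times\cdots\times\partial I\times\cdots\times I$ ($\partial I^0=\emptyset$). Notation: $B^{\mathfrak{S}_n}_r:=B^{(I^n,\partial I^n)}_r$ and $\widetilde{B}^{\mathfrak{S}_n}_r:=B^{(I^n\times I,\partial I^n\times I)}_r$. *)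

theory Defs
  imports Complex_Main "HOL-Library.Poly_Mapping" "HOL-Library.Function_Algebras" "HOL-Library.FSet"
begin

definition l_algebra :: "('l::comm_ring_1 \<Rightarrow> 'a::ring \<Rightarrow> 'a) \<Rightarrow> bool" where
  "l_algebra sc \<longleftrightarrow> Modules.module sc \<and>
     (\<forall>c x y. sc c (x * y) = sc c x * y \<and> sc c (x * y) = x * sc c y)"

text \<open>l-algebra homomorphism from the algebra on type 'a into the sub-algebra with carrier Cc
  of the ambient ring type 'c (operations of the ambient type, scaling scC).\<close>
definition l_alg_hom ::
  "('l::comm_ring_1 \<Rightarrow> 'a::ring \<Rightarrow> 'a) \<Rightarrow> ('l \<Rightarrow> 'c::ring \<Rightarrow> 'c) \<Rightarrow> 'c set \<Rightarrow> ('a \<Rightarrow> 'c) \<Rightarrow> bool" where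
  "l_alg_hom scA scC Cc h \<longleftrightarrow> (\<forall>x. h x \<in> Cc) \<and> (\<forall>x y. h (x + y) = h x + h y)
     \<and> (\<forall>x y. h (x * y) = h x * h y) \<and> (\<forall>c x. h (scA c x) = scC c (h x))"

text \<open>D \<otimes> Z[t_0,...,t_p]/(1 - sum t_i) is represented in the normal form D[t_1,...,t_p]
  (t_0 eliminated via t_0 = 1 - t_1 - ... - t_p): polynomials in the variables 1..p with
  coefficients in D.\<close>
type_synonym 'd simplexalg = "(nat \<Rightarrow>\<^sub>0 nat) \<Rightarrow>\<^sub>0 'd"

definition dlevel :: "'d set \<Rightarrow> nat \<Rightarrow> 'd::zero simplexalg set" where
  "dlevel Dc p = {P. \<forall>\<alpha>\<in>Poly_Mapping.keys P. Poly_Mapping.lookup P \<alpha> \<in> Dc \<and> Poly_Mapping.keys \<alpha> \<subseteq> {1..p}}"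

definition pscale :: "('l \<Rightarrow> 'd::zero \<Rightarrow> 'd) \<Rightarrow> 'l \<Rightarrow> 'd simplexalg \<Rightarrow> 'd simplexalg" where
  "pscale sc c P = Poly_Mapping.map (sc c) P"

definition fscale :: "('l \<Rightarrow> 'd::zero \<Rightarrow> 'd) \<Rightarrow> 'l \<Rightarrow> ('x \<Rightarrow> 'd simplexalg) \<Rightarrow> 'x \<Rightarrow> 'd simplexalg" where
  "fscale sc c f = (\<lambda>x. pscale sc c (f x))"

definition tvar :: "nat \<Rightarrow> int simplexalg" where
  "tvar j = Poly_Mapping.single (Poly_Mapping.single j 1) 1"

text \<open>The image of the coordinate t_j of Z^{Delta^p} in the normal form Z[t_1..t_p].\<close>
definition bary :: "nat \<Rightarrow> nat \<Rightarrow> int simplexalg" where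
  "bary p j = (if j = 0 then 1 - (\<Sum>k\<in>{1..p}. tvar k) else tvar j)"

text \<open>Action of an order preserving phi : [p] -> [q] (D^Delta_q -> D^Delta_p),
  t_i |-> sum over phi j = i of t_j, extended D-linearly (integers act through l).\<close>
definition sact :: "('l::comm_ring_1 \<Rightarrow> 'd::ab_group_add \<Rightarrow> 'd) \<Rightarrow> (nat \<Rightarrow> nat) \<Rightarrow> nat
    \<Rightarrow> 'd simplexalg \<Rightarrow> 'd simplexalg" where
  "sact sc \<phi> p P = (\<Sum>\<alpha>\<in>Poly_Mapping.keys P. Poly_Mapping.map (\<lambda>m. sc (of_int m) (Poly_Mapping.lookup P \<alpha>))
      (\<Prod>i\<in>Poly_Mapping.keys \<alpha>. (\<Sum>j\<in>{j. j \<le> p \<and> \<phi> j = i}. bary p j) ^ Poly_Mapping.lookup \<alpha> i))"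

definition monotone_map :: "nat \<Rightarrow> nat \<Rightarrow> (nat \<Rightarrow> nat) \<Rightarrow> bool" where
  "monotone_map p q \<phi> \<longleftrightarrow> (\<forall>i j. i \<le> j \<longrightarrow> j \<le> p \<longrightarrow> \<phi> i \<le> \<phi> j) \<and> (\<forall>j\<le>p. \<phi> j \<le> q)"

text \<open>Vertices: points of {0,1}^m (Leaf) and, for subdivisions, nondegenerate simplices (Node).\<close>
datatype hf = Leaf "bool list" | Node "hf fset"

fun hle :: "hf \<Rightarrow> hf \<Rightarrow> bool" where
  "hle (Leaf xs) (Leaf ys) = list_all2 (\<le>) xs ys"
| "hle (Node A) (Node B) = (A |\<subseteq>| B)"
| "hle _ _ = False"

definition chain_hf :: "hf fset \<Rightarrow> bool" where
  "chain_hf c \<longleftrightarrow> (\<forall>x\<in>fset c. \<forall>y\<in>fset c. hle x y \<or> hle y x)"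

text \<open>A complex is given by its set of nondegenerate simplices (nonempty chains);
  its p-simplices are the weakly increasing sequences of length p+1 spanning one of them.\<close>
definition simplices :: "hf fset set \<Rightarrow> nat \<Rightarrow> hf list set" where
  "simplices S p = {xs. length xs = Suc p \<and> sorted_wrt hle xs \<and> fset_of_list xs \<in> S}"

definition all_simplices :: "hf fset set \<Rightarrow> hf list set" where
  "all_simplices S = (\<Union>p. simplices S p)"

text \<open>Subdivision: nerve of the poset of nondegenerate simplices.\<close>
definition sd :: "hf fset set \<Rightarrow> hf fset set" where
  "sd S = {c. c \<noteq> {||} \<and> fset c \<subseteq> Node ` S \<and> chain_hf c}"

definition cube :: "nat \<Rightarrow> hf fset set" where
  "cube n = {c. c \<noteq> {||} \<and> fset c \<subseteq> Leaf ` {xs. length xs = n} \<and> chain_hf c}"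

definition cube_bdry :: "nat \<Rightarrow> hf fset set" where
  "cube_bdry n = {c \<in> cube n. \<exists>j<n. \<exists>b. \<forall>x\<in>fset c. \<exists>xs. x = Leaf xs \<and> xs ! j = b}"

text \<open>I^n x I = I^(n+1) (last coordinate is the I factor), and dI^n x I.\<close>
definition cyl_bdry :: "nat \<Rightarrow> hf fset set" where
  "cyl_bdry n = {c \<in> cube (Suc n). \<exists>j<n. \<exists>b. \<forall>x\<in>fset c. \<exists>xs. x = Leaf xs \<and> xs ! j = b}"

text \<open>sd^k of the simplicial map induced by a vertex map g (for every k).\<close>
primrec vmap :: "(bool list \<Rightarrow> bool list) \<Rightarrow> hf \<Rightarrow> hf" where
  "vmap g (Leaf xs) = Leaf (g xs)"
| "vmap g (Node A) = Node (fimage (vmap g) A)"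

fun lastv :: "hf \<Rightarrow> hf" where
  "lastv (Node A) = (THE x. x |\<in>| A \<and> (\<forall>y. y |\<in>| A \<longrightarrow> hle y x))"
| "lastv (Leaf xs) = Leaf xs"

text \<open>The vertex of sd^s Delta^0 and its images d^i in sd^s I.\<close>
definition sdpt :: "nat \<Rightarrow> hf" where
  "sdpt s = ((\<lambda>v. Node {|v|}) ^^ s) (Leaf [])"

definition d_vertex :: "nat \<Rightarrow> bool \<Rightarrow> hf" where
  "d_vertex s i = vmap (\<lambda>_. [i]) (sdpt s)"

text \<open>D^X = Hom(X, D^Delta), for the simplicial set X of complex S; Dc is the carrier of D
  inside the ambient type 'd.\<close>
definition smaps :: "('l::comm_ring_1 \<Rightarrow> 'd::ab_group_add \<Rightarrow> 'd) \<Rightarrow> 'd set \<Rightarrow> hf fset set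
    \<Rightarrow> (hf list \<Rightarrow> 'd simplexalg) set" where
  "smaps sc Dc S = {f.
     (\<forall>p. \<forall>xs\<in>simplices S p. f xs \<in> dlevel Dc p) \<and>
     (\<forall>xs. xs \<notin> all_simplices S \<longrightarrow> f xs = 0) \<and>
     (\<forall>p q \<phi> xs. monotone_map p q \<phi> \<longrightarrow> xs \<in> simplices S q \<longrightarrow>
        f (map (\<lambda>j. xs ! \<phi> j) [0..<Suc p]) = sact sc \<phi> p (f xs))}"

text \<open>D^{(K,L)}_r = ker(D^{sd^r K} -> D^{sd^r L}).\<close>
definition rel_alg :: "('l::comm_ring_1 \<Rightarrow> 'd::ab_group_add \<Rightarrow> 'd) \<Rightarrow> 'd set \<Rightarrow> hf fset set
    \<Rightarrow> hf fset set \<Rightarrow> nat \<Rightarrow> (hf list \<Rightarrow> 'd simplexalg) set" where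
  "rel_alg sc Dc K L r = {f \<in> smaps sc Dc ((sd ^^ r) K).
     \<forall>xs\<in>all_simplices ((sd ^^ r) L). f xs = 0}"

definition BS :: "('l::comm_ring_1 \<Rightarrow> 'b::ab_group_add \<Rightarrow> 'b) \<Rightarrow> nat \<Rightarrow> nat
    \<Rightarrow> (hf list \<Rightarrow> 'b simplexalg) set" where
  "BS sc n r = rel_alg sc UNIV (cube n) (cube_bdry n) r"

definition BSt :: "('l::comm_ring_1 \<Rightarrow> 'b::ab_group_add \<Rightarrow> 'b) \<Rightarrow> nat \<Rightarrow> nat
    \<Rightarrow> (hf list \<Rightarrow> 'b simplexalg) set" where
  "BSt sc n r = rel_alg sc UNIV (cube (Suc n)) (cyl_bdry n) r"

definition pullback :: "hf fset set \<Rightarrow> (hf \<Rightarrow> hf) \<Rightarrow> (hf list \<Rightarrow> 'd::zero) \<Rightarrow> hf list \<Rightarrow> 'd" where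
  "pullback S g f xs = (if xs \<in> all_simplices S then f (map g xs) else 0)"

text \<open>Evaluation at a vertex v, for maps Delta^0 -> C^Delta: C^{Delta^0} = C^Delta_0 = C.\<close>
definition eval_pt :: "(hf list \<Rightarrow> 'c::zero simplexalg) \<Rightarrow> hf \<Rightarrow> 'c" where
  "eval_pt F v = Poly_Mapping.lookup (F [v]) 0"

end

theory Submission
  imports Defs
begin

definition lin :: "('k \<Rightarrow> 'v::zero \<Rightarrow> 'w::comm_monoid_add) \<Rightarrow> ('k \<Rightarrow>\<^sub>0 'v) \<Rightarrow> 'w" where
  "lin g P = (\<Sum>k\<in>Poly_Mapping.keys P. g k (Poly_Mapping.lookup P k))"

lemma lin_superset:
  assumes "finite K" "Poly_Mapping.keys P \<subseteq> K" "\<And>k. g k 0 = 0"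
  shows "lin g P = (\<Sum>k\<in>K. g k (Poly_Mapping.lookup P k))"
  unfolding lin_def using assms
  by (intro sum.mono_neutral_left) (auto simp: in_keys_iff)

lemma lin_add:
  assumes "\<And>k. g k 0 = 0" "\<And>k a b. g k (a + b) = g k a + g k b"
  shows "lin g (P + Q) = lin g P + lin g Q"
  unfolding lin_def by (rule setsum_keys_plus_distrib) (auto simp: assms)

lemma lin_single: "(\<And>k. g k 0 = 0) \<Longrightarrow> lin g (Poly_Mapping.single k v) = g k v"
  unfolding lin_def by (cases "v = 0") auto

lemma lin_zero[simp]: "lin g 0 = 0"
  unfolding lin_def by simp

lemma pm_expand: "P = (\<Sum>k\<in>Poly_Mapping.keys P. Poly_Mapping.single k (Poly_Mapping.lookup P k))"
proof (rule poly_mapping_eqI)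
  fix j
  show "Poly_Mapping.lookup P j = Poly_Mapping.lookup (\<Sum>k\<in>Poly_Mapping.keys P. Poly_Mapping.single k (Poly_Mapping.lookup P k)) j"
    by (simp add: lookup_sum lookup_single when_def in_keys_iff)
qed

lemma additive_lin:
  assumes "additive f"
  shows "f P = lin (\<lambda>k v. f (Poly_Mapping.single k v)) P"
proof -
  have "f P = f (\<Sum>k\<in>Poly_Mapping.keys P. Poly_Mapping.single k (Poly_Mapping.lookup P k))"
    by (rule arg_cong[OF pm_expand])
  also have "\<dots> = lin (\<lambda>k v. f (Poly_Mapping.single k v)) P"
    unfolding lin_def by (rule additive.sum[OF assms])
  finally show ?thesis .
qed

lemma additive_eqI:
  assumes "additive f" "additive g" "\<And>k v. f (Poly_Mapping.single k v) = g (Poly_Mapping.single k v)"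
  shows "f P = g P"
  unfolding additive_lin[OF assms(1), of P] additive_lin[OF assms(2), of P] assms(3) ..

lemma additive_lin_fun:
  assumes "\<And>k. additive (g k)"
  shows "additive (lin g)"
  by (rule additive.intro, rule lin_add) (auto intro: additive.zero[OF assms] additive.add[OF assms])

lemma additive_const_sum:
  assumes "\<And>k. additive (g k)" shows "additive (\<lambda>x. \<Sum>k\<in>K. g k x)"
  by (rule additive.intro) (simp add: additive.add[OF assms] sum.distrib)

lemma lookup_map0: "f 0 = 0 \<Longrightarrow> Poly_Mapping.lookup (Poly_Mapping.map f p) k = f (Poly_Mapping.lookup p k)"
  by transfer (auto simp: when_def)

lemma additive_map:
  assumes "additive f" shows "additive (Poly_Mapping.map f)"
  by (rule additive.intro, rule poly_mapping_eqI)
     (simp add: lookup_map0 additive.zero[OF assms] additive.add[OF assms] lookup_add)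

lemma additive_mult_left: "additive (\<lambda>x. x * (y::'a::ring))"
  by (rule additive.intro) (simp add: distrib_right)
lemma additive_mult_right: "additive (\<lambda>x. (y::'a::ring) * x)"
  by (rule additive.intro) (simp add: distrib_left)

lemma additive_single: "additive (Poly_Mapping.single k)"
  by (rule additive.intro) (simp add: single_add)

lemma keys_lin: "Poly_Mapping.keys (lin g P) \<subseteq> (\<Union>k\<in>Poly_Mapping.keys P. Poly_Mapping.keys (g k (Poly_Mapping.lookup P k)))"
  unfolding lin_def by (rule keys_sum)



lemma additive_comp: "additive f \<Longrightarrow> additive g \<Longrightarrow> additive (\<lambda>x. f (g x))"
  by (rule additive.intro) (simp add: additive.add)

lemma additive_add_fun: "additive f \<Longrightarrow> additive g \<Longrightarrow> additive (\<lambda>x. f x + g x)"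
  by (rule additive.intro) (simp add: additive.add algebra_simps)

lemma additive_ev: "additive (\<lambda>c. c u)"
  by (rule additive.intro) simp

definition tens :: "('l::comm_ring_1 \<Rightarrow> 'd::ab_group_add \<Rightarrow> 'd) \<Rightarrow> 'd \<Rightarrow> ('k \<Rightarrow>\<^sub>0 int) \<Rightarrow> ('k \<Rightarrow>\<^sub>0 'd)" where
  "tens sc b Q = Poly_Mapping.map (\<lambda>m. sc (of_int m) b) Q"

definition smon :: "(nat \<Rightarrow> nat) \<Rightarrow> nat \<Rightarrow> (nat \<Rightarrow>\<^sub>0 nat) \<Rightarrow> int simplexalg" where
  "smon \<phi> p \<alpha> = (\<Prod>i\<in>Poly_Mapping.keys \<alpha>. (\<Sum>j\<in>{j. j \<le> p \<and> \<phi> j = i}. bary p j) ^ Poly_Mapping.lookup \<alpha> i)"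

lemma sact_lin: "sact sc \<phi> p P = lin (\<lambda>\<alpha> b. tens sc b (smon \<phi> p \<alpha>)) P"
  by (simp add: sact_def lin_def tens_def smon_def)

lemma smon_superset:
  assumes "finite K" "Poly_Mapping.keys \<alpha> \<subseteq> K"
  shows "smon \<phi> p \<alpha> = (\<Prod>i\<in>K. (\<Sum>j\<in>{j. j \<le> p \<and> \<phi> j = i}. bary p j) ^ Poly_Mapping.lookup \<alpha> i)"
  unfolding smon_def using assms
  by (intro prod.mono_neutral_left) (auto simp: in_keys_iff)

lemma smon_add: "smon \<phi> p (\<alpha> + \<beta>) = smon \<phi> p \<alpha> * smon \<phi> p \<beta>"
proof -
  let ?K = "Poly_Mapping.keys \<alpha> \<union> Poly_Mapping.keys \<beta>"
  have k: "Poly_Mapping.keys (\<alpha> + \<beta>) \<subseteq> ?K" by (rule keys_add)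
  show ?thesis
    using smon_superset[OF _ k] smon_superset[of ?K \<alpha>] smon_superset[of ?K \<beta>]
    by (simp add: lookup_add power_add prod.distrib)
qed

lemma smon_zero[simp]: "smon \<phi> p 0 = 1"
  by (simp add: smon_def)

definition shift :: "(nat \<Rightarrow>\<^sub>0 nat) \<Rightarrow> 'd::ab_group_add simplexalg \<Rightarrow> 'd simplexalg" where
  "shift \<alpha> P = lin (\<lambda>\<beta> b. Poly_Mapping.single (\<alpha> + \<beta>) b) P"

definition flat :: "('d::ab_group_add simplexalg) simplexalg \<Rightarrow> 'd simplexalg" where
  "flat F = lin shift F"

lemma additive_shift: "additive (shift \<alpha>)"
  unfolding shift_def by (rule additive_lin_fun) (rule additive_single)

lemma shift_single[simp]: "shift \<alpha> (Poly_Mapping.single \<beta> b) = Poly_Mapping.single (\<alpha> + \<beta>) b"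
  unfolding shift_def by (rule lin_single) simp

lemma shift_zero[simp]: "shift \<alpha> 0 = 0"
  by (simp add: shift_def)

lemma shift_0: "shift 0 P = P"
  by (rule additive_eqI[OF additive_shift additive.intro]) simp_all

lemma additive_flat: "additive flat"
  unfolding flat_def by (rule additive_lin_fun) (rule additive_shift)

lemma flat_single[simp]: "flat (Poly_Mapping.single \<alpha> P) = shift \<alpha> P"
  unfolding flat_def by (rule lin_single) simp

lemma shift_mult:
  "shift (\<alpha> + \<beta>) (P * Q) = shift \<alpha> P * shift \<beta> (Q :: 'd::ring simplexalg)"
proof -
  have "\<And>a. shift (\<alpha> + \<beta>) (Poly_Mapping.single a x * Q) = shift \<alpha> (Poly_Mapping.single a x) * shift \<beta> Q" for x
  proof -
    fix a
    show "shift (\<alpha> + \<beta>) (Poly_Mapping.single a x * Q) = shift \<alpha> (Poly_Mapping.single a x) * shift \<beta> Q"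
      by (rule additive_eqI[OF additive_comp[OF additive_shift additive_mult_right]
            additive_comp[OF additive_mult_right additive_shift]])
         (simp add: mult_single add_ac)
  qed
  then show ?thesis
    by (rule additive_eqI[OF additive_comp[OF additive_shift additive_mult_left]
            additive_comp[OF additive_mult_left additive_shift]])
qed

lemma flat_mult: "flat (F * G) = flat F * flat (G :: ('d::ring simplexalg) simplexalg)"
proof -
  have "flat (Poly_Mapping.single a x * G) = flat (Poly_Mapping.single a x) * flat G" for a x
    by (rule additive_eqI[OF additive_comp[OF additive_flat additive_mult_right]
            additive_comp[OF additive_mult_right additive_flat]])
       (simp add: mult_single shift_mult)
  then show ?thesis
    by (rule additive_eqI[OF additive_comp[OF additive_flat additive_mult_left]
            additive_comp[OF additive_mult_left additive_flat]])
qed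

lemma map_mult_hom:
  fixes f :: "'x::ring \<Rightarrow> 'y::ring"
  assumes "additive f" "\<And>a b. f (a * b) = f a * f b"
  shows "Poly_Mapping.map f (F * G) = Poly_Mapping.map f F * Poly_Mapping.map f (G :: (nat \<Rightarrow>\<^sub>0 nat) \<Rightarrow>\<^sub>0 'x)"
proof -
  have f0: "f 0 = 0" by (rule additive.zero[OF assms(1)])
  have am: "additive (Poly_Mapping.map f)" by (rule additive_map[OF assms(1)])
  have "Poly_Mapping.map f (Poly_Mapping.single a x * G) = Poly_Mapping.map f (Poly_Mapping.single a x) * Poly_Mapping.map f G" for a x
    by (rule additive_eqI[OF additive_comp[OF am additive_mult_right]
            additive_comp[OF additive_mult_right am]])
       (simp add: mult_single f0 assms(2))
  then show ?thesis
    by (rule additive_eqI[OF additive_comp[OF am additive_mult_left]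
            additive_comp[OF additive_mult_left am]])
qed



lemma lookup_pscale: "Modules.module sc \<Longrightarrow> Poly_Mapping.lookup (pscale sc c P) k = sc c (Poly_Mapping.lookup P k)"
  unfolding pscale_def by (rule lookup_map0) (simp add: module.scale_zero_right)

lemma module_pscale:
  assumes m: "Modules.module sc"
  shows "Modules.module (pscale sc)"
proof
  show "pscale sc a (x + y) = pscale sc a x + pscale sc a y" for a x y
    by (rule poly_mapping_eqI) (simp add: lookup_pscale[OF m] lookup_add module.scale_right_distrib[OF m])
  show "pscale sc (a + b) x = pscale sc a x + pscale sc b x" for a b x
    by (rule poly_mapping_eqI) (simp add: lookup_pscale[OF m] lookup_add module.scale_left_distrib[OF m])
  show "pscale sc a (pscale sc b x) = pscale sc (a * b) x" for a b x
    by (rule poly_mapping_eqI) (simp add: lookup_pscale[OF m] module.scale_scale[OF m])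
  show "pscale sc 1 x = x" for x
    by (rule poly_mapping_eqI) (simp add: lookup_pscale[OF m] module.scale_one[OF m])
qed

lemma module_fscale:
  assumes m: "Modules.module sc"
  shows "Modules.module (fscale sc)"
proof -
  have m2: "Modules.module (pscale sc)" by (rule module_pscale[OF m])
  show ?thesis
  proof
    show "fscale sc a (x + y) = fscale sc a x + fscale sc a y" for a x y
      by (simp add: fscale_def fun_eq_iff module.scale_right_distrib[OF m2])
    show "fscale sc (a + b) x = fscale sc a x + fscale sc b x" for a b x
      by (simp add: fscale_def fun_eq_iff module.scale_left_distrib[OF m2])
    show "fscale sc a (fscale sc b x) = fscale sc (a * b) x" for a b x
      by (simp add: fscale_def fun_eq_iff module.scale_scale[OF m2])
    show "fscale sc 1 x = x" for x
      by (simp add: fscale_def fun_eq_iff module.scale_one[OF m2])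
  qed
qed

context
  fixes sc :: "'l::comm_ring_1 \<Rightarrow> 'd::ab_group_add \<Rightarrow> 'd"
  assumes m: "Modules.module sc"
begin

lemma lookup_tens: "Poly_Mapping.lookup (tens sc b Q) k = sc (of_int (Poly_Mapping.lookup Q k)) b"
  unfolding tens_def by (rule lookup_map0) (simp add: module.scale_zero_left[OF m])

lemma additive_tens_b: "additive (\<lambda>b. tens sc b Q)"
  by (rule additive.intro, rule poly_mapping_eqI) (simp add: lookup_tens lookup_add module.scale_right_distrib[OF m])

lemma additive_tens_Q: "additive (tens sc b)"
  by (rule additive.intro, rule poly_mapping_eqI) (simp add: lookup_tens lookup_add module.scale_left_distrib[OF m])

lemma tens_zero[simp]: "tens sc 0 Q = 0"
  by (rule additive.zero[OF additive_tens_b])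

lemma tens_single: "tens sc b (Poly_Mapping.single k m') = Poly_Mapping.single k (sc (of_int m') b)"
  by (rule poly_mapping_eqI) (simp add: lookup_tens lookup_single when_def module.scale_zero_left[OF m])

lemma additive_sact: "additive (sact sc \<phi> p)"
  unfolding sact_lin by (rule additive_lin_fun) (rule additive_tens_b)

lemma sact_single: "sact sc \<phi> p (Poly_Mapping.single \<alpha> b) = tens sc b (smon \<phi> p \<alpha>)"
  unfolding sact_lin by (rule lin_single) simp

definition star :: "((nat \<Rightarrow>\<^sub>0 nat) \<Rightarrow>\<^sub>0 int) \<Rightarrow> 'd simplexalg \<Rightarrow> 'd simplexalg" where
  "star Q R = lin (\<lambda>\<gamma> m'. lin (\<lambda>\<delta> b. Poly_Mapping.single (\<gamma> + \<delta>) (sc (of_int m') b)) R) Q"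

lemma star_g0: "lin (\<lambda>\<delta> b. Poly_Mapping.single (\<gamma> + \<delta>) (sc (of_int 0) b)) R = 0"
  by (simp add: lin_def module.scale_zero_left[OF m])

lemma additive_star_Q: "additive (\<lambda>Q. star Q R)"
  unfolding star_def
proof (rule additive_lin_fun, rule additive.intro)
  fix k :: "nat \<Rightarrow>\<^sub>0 nat" and x y :: int
  show "lin (\<lambda>\<delta> b. Poly_Mapping.single (k + \<delta>) (sc (of_int (x + y)) b)) R =
       lin (\<lambda>\<delta> b. Poly_Mapping.single (k + \<delta>) (sc (of_int x) b)) R +
       lin (\<lambda>\<delta> b. Poly_Mapping.single (k + \<delta>) (sc (of_int y) b)) R"
    by (simp add: lin_def module.scale_left_distrib[OF m] single_add sum.distrib)
qed

lemma additive_star_R: "additive (star Q)"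
  unfolding star_def lin_def[of _ Q]
  by (rule additive_const_sum, rule additive_lin_fun, rule additive_comp[OF additive_single])
     (rule additive.intro, simp add: module.scale_right_distrib[OF m])

lemma star_single_single: "star (Poly_Mapping.single \<gamma> m') (Poly_Mapping.single \<delta> b) = Poly_Mapping.single (\<gamma> + \<delta>) (sc (of_int m') b)"
  unfolding star_def
  by (subst lin_single, rule star_g0, rule lin_single) (simp add: module.scale_zero_right[OF m])

lemma star_tens: "star Q (tens sc b Q') = tens sc b (Q * Q')"
proof -
  have "star (Poly_Mapping.single g x) (tens sc b Q') = tens sc b (Poly_Mapping.single g x * Q')" for g x
    by (rule additive_eqI[OF additive_comp[OF additive_star_R additive_tens_Q]
            additive_comp[OF additive_tens_Q additive_mult_right]])
       (simp add: tens_single mult_single star_single_single module.scale_scale[OF m])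
  then show ?thesis
    by (rule additive_eqI[OF additive_star_Q
            additive_comp[OF additive_tens_Q additive_mult_left]])
qed

end



lemma pscale_single: "Modules.module sc \<Longrightarrow> pscale sc c (Poly_Mapping.single k b) = Poly_Mapping.single k (sc c b)"
  unfolding pscale_def by (rule map_single) (simp add: module.scale_zero_right)

lemma pscale_zero[simp]: "Modules.module sc \<Longrightarrow> pscale sc c 0 = 0"
  by (rule module.scale_zero_right[OF module_pscale])

context
  fixes sc :: "'l::comm_ring_1 \<Rightarrow> 'd::ab_group_add \<Rightarrow> 'd"
  assumes m: "Modules.module sc"
begin

lemma shift_pscale: "shift \<gamma> (pscale sc c R) = lin (\<lambda>\<delta> b. Poly_Mapping.single (\<gamma> + \<delta>) (sc c b)) R"
proof -
  have a1: "additive (\<lambda>R. shift \<gamma> (pscale sc c R))"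
    by (rule additive_comp[OF additive_shift], rule additive.intro)
       (rule module.scale_right_distrib[OF module_pscale[OF m]])
  have a2: "additive (lin (\<lambda>\<delta> b. Poly_Mapping.single (\<gamma> + \<delta>) (sc c b)))"
    by (rule additive_lin_fun, rule additive_comp[OF additive_single])
       (rule additive.intro, simp add: module.scale_right_distrib[OF m])
  show ?thesis
    by (rule additive_eqI[OF a1 a2])
       (simp add: pscale_def module.scale_zero_right[OF m] lin_single)
qed

lemma star_single_left: "star sc (Poly_Mapping.single \<gamma> m') R = lin (\<lambda>\<delta> b. Poly_Mapping.single (\<gamma> + \<delta>) (sc (of_int m') b)) R"
  unfolding star_def[OF m] by (rule lin_single) (rule star_g0[OF m])

lemma flat_tens_pscale: "flat (tens (pscale sc) R Q) = star sc Q R"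
proof -
  have mp: "Modules.module (pscale sc)" by (rule module_pscale[OF m])
  show ?thesis
    by (rule additive_eqI[OF additive_comp[OF additive_flat additive_tens_Q[OF mp]] additive_star_Q[OF m]])
       (simp add: tens_single[OF mp] star_single_left shift_pscale)
qed

lemma map_ev_tens: "Poly_Mapping.map (\<lambda>c. c u) (tens (fscale sc) c Q) = tens (pscale sc) (c u) Q"
proof -
  have mp: "Modules.module (pscale sc)" by (rule module_pscale[OF m])
  have mf: "Modules.module (fscale sc)" by (rule module_fscale[OF m])
  show ?thesis
    by (rule poly_mapping_eqI) (simp add: lookup_map0 lookup_tens[OF mp] lookup_tens[OF mf] fscale_def)
qed

lemma star_sact: "star sc (smon \<phi> p \<alpha>) (sact sc \<phi> p R) = sact sc \<phi> p (shift \<alpha> R)"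
  by (rule additive_eqI[OF additive_comp[OF additive_star_R[OF m] additive_sact[OF m]]
        additive_comp[OF additive_sact[OF m] additive_shift]])
     (simp add: sact_single[OF m] star_tens[OF m] smon_add)

lemma natural_flat:
  fixes F :: "('x \<Rightarrow> 'd simplexalg) simplexalg"
  assumes "\<And>\<alpha>. \<alpha> \<in> Poly_Mapping.keys F \<Longrightarrow> Poly_Mapping.lookup F \<alpha> u' = sact sc \<phi> p (Poly_Mapping.lookup F \<alpha> u)"
  shows "flat (Poly_Mapping.map (\<lambda>c. c u') (sact (fscale sc) \<phi> p F)) = sact sc \<phi> p (flat (Poly_Mapping.map (\<lambda>c. c u) F))"
proof -
  have amap: "additive (Poly_Mapping.map (\<lambda>c::'x \<Rightarrow> 'd simplexalg. c u'))" "additive (Poly_Mapping.map (\<lambda>c::'x \<Rightarrow> 'd simplexalg. c u))"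
    by (rule additive_map[OF additive_ev])+
  have "flat (Poly_Mapping.map (\<lambda>c. c u') (sact (fscale sc) \<phi> p F))
      = (\<Sum>\<alpha>\<in>Poly_Mapping.keys F. flat (Poly_Mapping.map (\<lambda>c. c u') (tens (fscale sc) (Poly_Mapping.lookup F \<alpha>) (smon \<phi> p \<alpha>))))"
    unfolding sact_lin lin_def
    by (simp add: additive.sum[OF amap(1)] additive.sum[OF additive_flat])
  also have "\<dots> = (\<Sum>\<alpha>\<in>Poly_Mapping.keys F. sact sc \<phi> p (shift \<alpha> (Poly_Mapping.lookup F \<alpha> u)))"
    by (rule sum.cong[OF refl]) (simp add: map_ev_tens flat_tens_pscale assms star_sact)
  also have "\<dots> = sact sc \<phi> p (flat (Poly_Mapping.map (\<lambda>c. c u) F))"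
  proof -
    have "Poly_Mapping.map (\<lambda>c. c u) F = lin (\<lambda>k v. Poly_Mapping.map (\<lambda>c. c u) (Poly_Mapping.single k v)) F"
      by (rule additive_lin[OF amap(2)])
    then have "Poly_Mapping.map (\<lambda>c. c u) F = (\<Sum>\<alpha>\<in>Poly_Mapping.keys F. Poly_Mapping.single \<alpha> (Poly_Mapping.lookup F \<alpha> u))"
      by (simp add: lin_def)
    then show ?thesis
      by (simp add: additive.sum[OF additive_sact[OF m]] additive.sum[OF additive_flat])
  qed
  finally show ?thesis .
qed

lemma flat_pscale: "flat (pscale (pscale sc) c F) = pscale sc c (flat F)"
proof -
  have mp: "Modules.module (pscale sc)" by (rule module_pscale[OF m])
  have a1: "additive (pscale (pscale sc) c)" "additive (pscale sc c)"
    by (rule additive.intro, rule module.scale_right_distrib[OF module_pscale[OF mp]])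
       (rule additive.intro, rule module.scale_right_distrib[OF mp])
  have sh: "shift \<alpha> (pscale sc c P) = pscale sc c (shift \<alpha> P)" for \<alpha> P
    by (rule additive_eqI[OF additive_comp[OF additive_shift a1(2)] additive_comp[OF a1(2) additive_shift]])
       (simp add: pscale_single[OF m])
  show ?thesis
    by (rule additive_eqI[OF additive_comp[OF additive_flat a1(1)] additive_comp[OF a1(2) additive_flat]])
       (simp add: pscale_single[OF mp] sh)
qed

lemma map_ev_pscale: "Poly_Mapping.map (\<lambda>c. c u) (pscale (fscale sc) c F) = pscale (pscale sc) c (Poly_Mapping.map (\<lambda>c. c u) F)"
proof -
  have mp: "Modules.module (pscale sc)" by (rule module_pscale[OF m])
  have mf: "Modules.module (fscale sc)" by (rule module_fscale[OF m])
  show ?thesis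
    by (rule poly_mapping_eqI) (simp add: lookup_map0 lookup_pscale[OF mp] lookup_pscale[OF mf] fscale_def)
qed

end



lemma hle_refl[simp]: "hle x x"
  by (cases x) (auto intro: list_all2_refl)

lemma la_trans: "list_all2 (\<le>) xs ys \<Longrightarrow> list_all2 (\<le>) ys zs \<Longrightarrow> list_all2 ((\<le>)::bool\<Rightarrow>bool\<Rightarrow>bool) xs zs"
  using list_all2_trans[of "(\<le>)" "(\<le>)" "(\<le>)" xs ys zs] by (meson order_trans)

lemma la_antisym: "list_all2 (\<le>) xs ys \<Longrightarrow> list_all2 (\<le>) ys xs \<Longrightarrow> xs = (ys::bool list)"
  by (rule list_all2_antisym[of "(\<le>)" "(\<le>)" xs ys]) (rule order_antisym, assumption+)

lemma hle_trans: "hle x y \<Longrightarrow> hle y z \<Longrightarrow> hle x z"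
proof (cases x)
  case (Leaf xs) then show "hle x y \<Longrightarrow> hle y z \<Longrightarrow> hle x z"
    by (cases y; cases z) (simp_all, rule la_trans, assumption+)
next
  case (Node A) then show "hle x y \<Longrightarrow> hle y z \<Longrightarrow> hle x z"
    by (cases y; cases z) simp_all
qed

lemma hle_antisym: "hle x y \<Longrightarrow> hle y x \<Longrightarrow> x = y"
proof (cases x)
  case (Leaf xs) then show "hle x y \<Longrightarrow> hle y x \<Longrightarrow> x = y"
    by (cases y) (simp_all add: la_antisym)
next
  case (Node A) then show "hle x y \<Longrightarrow> hle y x \<Longrightarrow> x = y"
    by (cases y) simp_all
qed

lemma chain_max_set:
  assumes "finite X" "X \<noteq> {}" "\<forall>x\<in>X. \<forall>y\<in>X. hle x y \<or> hle y x"
  shows "\<exists>m\<in>X. \<forall>y\<in>X. hle y m"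
  using assms
proof (induction X rule: finite_ne_induct)
  case (singleton x) then show ?case by simp
next
  case (insert x F)
  then obtain m where m: "m \<in> F" "\<forall>y\<in>F. hle y m" by auto
  show ?case
  proof (cases "hle m x")
    case True then show ?thesis using m by (auto intro: hle_trans)
  next
    case False
    then have "hle x m" using insert.prems m(1) by auto
    then show ?thesis using m by auto
  qed
qed

lemma lastv_max:
  assumes "chain_hf c" "c \<noteq> {||}"
  shows "lastv (Node c) |\<in>| c \<and> (\<forall>y. y |\<in>| c \<longrightarrow> hle y (lastv (Node c)))"
proof -
  have ne: "fset c \<noteq> {}" using assms(2) by (metis bot_fset.rep_eq fset_inject)
  obtain m where m: "m |\<in>| c" "\<forall>y. y |\<in>| c \<longrightarrow> hle y m"
    using chain_max_set[of "fset c", OF _ ne] assms(1) unfolding chain_hf_def by auto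
  have "(THE x. x |\<in>| c \<and> (\<forall>y. y |\<in>| c \<longrightarrow> hle y x)) = m"
    by (rule the_equality) (use m in \<open>auto intro: hle_antisym\<close>)
  then show ?thesis using m by simp
qed

lemma lastv_single[simp]: "lastv (Node {|x|}) = x"
  by (simp, rule the_equality) auto

definition good :: "hf fset set \<Rightarrow> bool" where
  "good S \<longleftrightarrow> (\<forall>c\<in>S. c \<noteq> {||} \<and> chain_hf c) \<and> (\<forall>c\<in>S. \<forall>d. d |\<subseteq>| c \<longrightarrow> d \<noteq> {||} \<longrightarrow> d \<in> S)"

lemma chain_hf_subset: "chain_hf c \<Longrightarrow> d |\<subseteq>| c \<Longrightarrow> chain_hf d"
  unfolding chain_hf_def using fsubsetD by metis

lemma good_sd: "good (sd S)"
  unfolding good_def sd_def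
proof (intro conjI ballI allI impI; clarsimp)
  fix c d assume "fset c \<subseteq> Node ` S" "chain_hf c" "d |\<subseteq>| c" "d \<noteq> {||}"
  then show "fset d \<subseteq> Node ` S \<and> chain_hf d"
    using chain_hf_subset[of c d] fsubsetD[of d c] by blast
qed

lemma good_sdk: "good S \<Longrightarrow> good ((sd ^^ k) S)"
  by (cases k) (auto simp: good_sd)

lemma good_cube: "good (cube m)"
  unfolding good_def cube_def
proof (intro conjI ballI allI impI; clarsimp)
  fix c d assume "fset c \<subseteq> Leaf ` {xs. length xs = m}" "chain_hf c" "d |\<subseteq>| c" "d \<noteq> {||}"
  then show "fset d \<subseteq> Leaf ` {xs. length xs = m} \<and> chain_hf d"
    using chain_hf_subset[of c d] fsubsetD[of d c] by blast
qed

lemma good_cube_bdry: "good (cube_bdry m)"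
proof -
  have g: "good (cube m)" by (rule good_cube)
  show ?thesis unfolding good_def cube_bdry_def
  proof (rule conjI; intro ballI allI impI)
    fix c assume "c \<in> {c \<in> cube m. \<exists>j<m. \<exists>b. \<forall>x\<in>fset c. \<exists>xs. x = Leaf xs \<and> xs ! j = b}"
    then show "c \<noteq> {||} \<and> chain_hf c" using g unfolding good_def by blast
  next
    fix c d assume c: "c \<in> {c \<in> cube m. \<exists>j<m. \<exists>b. \<forall>x\<in>fset c. \<exists>xs. x = Leaf xs \<and> xs ! j = b}"
      and d: "d |\<subseteq>| c" "d \<noteq> {||}"
    then have "d \<in> cube m" using g unfolding good_def by blast
    moreover from c obtain j b where "j < m" "\<forall>x\<in>fset c. \<exists>xs. x = Leaf xs \<and> xs ! j = b" by blast
    then have "\<exists>j<m. \<exists>b. \<forall>x\<in>fset d. \<exists>xs. x = Leaf xs \<and> xs ! j = b"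
      using fsubsetD[OF d(1)] by blast
    ultimately show "d \<in> {c \<in> cube m. \<exists>j<m. \<exists>b. \<forall>x\<in>fset c. \<exists>xs. x = Leaf xs \<and> xs ! j = b}" by blast
  qed
qed

definition simpl :: "hf fset set \<Rightarrow> hf fset set \<Rightarrow> (hf \<Rightarrow> hf) \<Rightarrow> bool" where
  "simpl S T G \<longleftrightarrow> (\<forall>c\<in>S. G |`| c \<in> T) \<and>
     (\<forall>c\<in>S. \<forall>x y. x |\<in>| c \<longrightarrow> y |\<in>| c \<longrightarrow> hle x y \<longrightarrow> hle (G x) (G y))"

lemma simpl_simplices:
  assumes "simpl S T G" "xs \<in> simplices S p"
  shows "map G xs \<in> simplices T p"
proof -
  have c: "fset_of_list xs \<in> S" "sorted_wrt hle xs" "length xs = Suc p"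
    using assms(2) by (auto simp: simplices_def)
  have mono: "\<forall>x y. x |\<in>| fset_of_list xs \<longrightarrow> y |\<in>| fset_of_list xs \<longrightarrow> hle x y \<longrightarrow> hle (G x) (G y)"
    and img: "G |`| fset_of_list xs \<in> T"
    using assms(1) c(1) unfolding simpl_def by blast+
  have "sorted_wrt hle (map G xs)"
    unfolding sorted_wrt_map
  proof (rule sorted_wrt_mono_rel[OF _ c(2)])
    fix x y assume "x \<in> set xs" "y \<in> set xs" "hle x y"
    then show "hle (G x) (G y)" using mono by (simp add: fset_of_list_elem)
  qed
  then show ?thesis using img c(3) unfolding simplices_def by simp
qed

lemma simpl_all:
  "simpl S T G \<Longrightarrow> xs \<in> all_simplices S \<Longrightarrow> map G xs \<in> all_simplices T"
proof -
  assume a: "simpl S T G" "xs \<in> all_simplices S"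
  then obtain p where "xs \<in> simplices S p" unfolding all_simplices_def by blast
  then have "map G xs \<in> simplices T p" by (rule simpl_simplices[OF a(1)])
  then show ?thesis unfolding all_simplices_def by blast
qed

lemma simpl_comp:
  assumes "simpl S T G" "simpl T U G'"
  shows "simpl S U (G' \<circ> G)"
  unfolding simpl_def
proof (intro conjI ballI allI impI)
  fix c assume c: "c \<in> S"
  then have "G |`| c \<in> T" using assms(1) unfolding simpl_def by blast
  then have "G' |`| (G |`| c) \<in> U" using assms(2) unfolding simpl_def by blast
  then show "(G' \<circ> G) |`| c \<in> U" by (simp add: fset.map_comp)
next
  fix c x y assume c: "c \<in> S" and xy: "x |\<in>| c" "y |\<in>| c" "hle x y"
  then have T: "G |`| c \<in> T" and h: "hle (G x) (G y)" using assms(1) unfolding simpl_def by blast+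
  have "G x |\<in>| G |`| c" "G y |\<in>| G |`| c" using xy by auto
  then show "hle ((G' \<circ> G) x) ((G' \<circ> G) y)" using assms(2) T h unfolding simpl_def by auto
qed

lemma simpl_id: "simpl S S id"
  unfolding simpl_def by (simp add: fset.map_id0)

lemma simpl_sd:
  assumes "simpl S T G" "\<And>A. A \<in> S \<Longrightarrow> G' (Node A) = Node (G |`| A)"
  shows "simpl (sd S) (sd T) G'"
proof -
  have mono: "hle (G' x) (G' y)" if "c \<in> sd S" "x |\<in>| c" "y |\<in>| c" "hle x y" for c x y
  proof -
    have "x \<in> Node ` S" "y \<in> Node ` S" using that unfolding sd_def by auto
    then obtain A B where AB: "x = Node A" "y = Node B" "A \<in> S" "B \<in> S"
      by blast
    then have "A |\<subseteq>| B" using that(4) by simp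
    then show ?thesis using AB assms(2) by auto
  qed
  have "G' |`| c \<in> sd T" if "c \<in> sd S" for c
  proof -
    have "fset (G' |`| c) \<subseteq> Node ` T"
      using that assms by (auto simp: sd_def simpl_def)
    moreover have "chain_hf (G' |`| c)" unfolding chain_hf_def
    proof (intro ballI)
      fix u v assume "u \<in> fset (G' |`| c)" "v \<in> fset (G' |`| c)"
      then obtain x y where xy: "x |\<in>| c" "y |\<in>| c" "u = G' x" "v = G' y" by auto
      have "chain_hf c" using that unfolding sd_def by blast
      then have "hle x y \<or> hle y x" using xy unfolding chain_hf_def by blast
      then show "hle u v \<or> hle v u" using mono[OF that] xy by blast
    qed
    ultimately show ?thesis using that by (auto simp: sd_def)
  qed
  then show ?thesis using mono by (auto simp: simpl_def)
qed

lemma simpl_vmap: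
  "simpl S T (vmap g) \<Longrightarrow> simpl ((sd ^^ k) S) ((sd ^^ k) T) (vmap g)"
  by (induction k) (auto intro: simpl_sd)

lemma simpl_lastv:
  assumes "good T"
  shows "simpl (sd T) T lastv"
proof -
  have lv: "lastv (Node A) |\<in>| A \<and> (\<forall>y. y |\<in>| A \<longrightarrow> hle y (lastv (Node A)))" if "A \<in> T" for A
    using assms that by (intro lastv_max) (auto simp: good_def)
  have img: "lastv |`| c \<in> T" if c: "c \<in> sd T" for c
  proof -
    have cc: "chain_hf c" "c \<noteq> {||}" using c by (auto simp: sd_def)
    obtain m where m: "m |\<in>| c" "\<forall>y. y |\<in>| c \<longrightarrow> hle y m"
      using lastv_max[OF cc] by blast
    obtain M where M: "m = Node M" "M \<in> T" using m(1) c by (auto simp: sd_def)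
    have "lastv |`| c |\<subseteq>| M"
    proof
      fix z assume "z |\<in>| lastv |`| c"
      then obtain x where x: "x |\<in>| c" "z = lastv x" by auto
      then obtain A where A: "x = Node A" "A \<in> T" using c by (auto simp: sd_def)
      then have "A |\<subseteq>| M" using m(2) x(1) M(1) by fastforce
      then show "z |\<in>| M" using lv[OF A(2)] A x by auto
    qed
    moreover have "lastv |`| c \<noteq> {||}" using cc by simp
    ultimately show ?thesis using assms M(2) unfolding good_def by blast
  qed
  have "hle (lastv x) (lastv y)" if "c \<in> sd T" "x |\<in>| c" "y |\<in>| c" "hle x y" for c x y
  proof -
    have "x \<in> Node ` T" "y \<in> Node ` T" using that unfolding sd_def by auto
    then obtain A B where AB: "x = Node A" "y = Node B" "A \<in> T" "B \<in> T"
      by blast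
    then have "A |\<subseteq>| B" using that(4) by simp
    then show ?thesis using AB lv by blast
  qed
  then show ?thesis using img by (auto simp: simpl_def)
qed

lemma simpl_lastv_pow:
  assumes "good T"
  shows "simpl ((sd ^^ (j + s)) T) ((sd ^^ j) T) (lastv ^^ s)"
proof (induction s)
  case 0 then show ?case using simpl_id[of "(sd ^^ j) T"] by (simp add: id_def)
next
  case (Suc s)
  have eq: "(sd ^^ (j + Suc s)) T = sd ((sd ^^ (j + s)) T)" by simp
  have 1: "simpl (sd ((sd ^^ (j + s)) T)) ((sd ^^ (j + s)) T) lastv"
    by (rule simpl_lastv[OF good_sdk[OF assms]])
  have "simpl (sd ((sd ^^ (j + s)) T)) ((sd ^^ j) T) (lastv ^^ s \<circ> lastv)"
    by (rule simpl_comp[OF 1 Suc])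
  then show ?case unfolding eq funpow_Suc_right .
qed



lemma simpl_leaf:
  assumes len: "\<And>xs. length xs = a \<Longrightarrow> length (g xs) = b"
    and mono: "\<And>xs ys. length xs = a \<Longrightarrow> length ys = a \<Longrightarrow> list_all2 (\<le>) xs ys \<Longrightarrow> list_all2 (\<le>) (g xs) (g ys)"
  shows "simpl (cube a) (cube b) (vmap g)"
proof -
  have mo: "hle (vmap g x) (vmap g y)" if "c \<in> cube a" "x |\<in>| c" "y |\<in>| c" "hle x y" for c x y
  proof -
    have "x \<in> Leaf ` {xs. length xs = a}" "y \<in> Leaf ` {xs. length xs = a}" using that unfolding cube_def by auto
    then obtain xs ys where "x = Leaf xs" "y = Leaf ys" "length xs = a" "length ys = a" by blast
    then show ?thesis using that(4) mono by simp
  qed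
  have "vmap g |`| c \<in> cube b" if c: "c \<in> cube a" for c
  proof -
    have "fset (vmap g |`| c) \<subseteq> Leaf ` {xs. length xs = b}"
    proof
      fix u assume "u \<in> fset (vmap g |`| c)"
      then obtain x where x: "x |\<in>| c" "u = vmap g x" by auto
      then have "x \<in> Leaf ` {xs. length xs = a}" using c unfolding cube_def by auto
      then show "u \<in> Leaf ` {xs. length xs = b}" using x len by auto
    qed
    moreover have "chain_hf (vmap g |`| c)" unfolding chain_hf_def
    proof (intro ballI)
      fix u v assume "u \<in> fset (vmap g |`| c)" "v \<in> fset (vmap g |`| c)"
      then obtain x y where xy: "x |\<in>| c" "y |\<in>| c" "u = vmap g x" "v = vmap g y" by auto
      have "chain_hf c" using c unfolding cube_def by blast
      then have "hle x y \<or> hle y x" using xy unfolding chain_hf_def by blast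
      then show "hle u v \<or> hle v u" using mo[OF c] xy by blast
    qed
    moreover have "c \<noteq> {||}" using c unfolding cube_def by blast
    ultimately show ?thesis unfolding cube_def by auto
  qed
  then show ?thesis using mo unfolding simpl_def by blast
qed

lemma la_butlast: "list_all2 P xs ys \<Longrightarrow> list_all2 P (butlast xs) (butlast ys)"
  by (simp add: butlast_conv_take list_all2_lengthD list_all2_takeI)

lemma simpl_butlast: "simpl (cube (Suc n)) (cube n) (vmap butlast)"
  by (rule simpl_leaf) (auto intro: la_butlast)

lemma simpl_lastl: "simpl (cube (Suc n)) (cube 1) (vmap (\<lambda>l. [last l]))"
proof (rule simpl_leaf)
  fix xs ys :: "bool list"
  assume "length xs = Suc n" "length ys = Suc n" "list_all2 (\<le>) xs ys"
  then have "xs ! n \<le> ys ! n" using list_all2_nthD[of "(\<le>)" xs ys n] by simp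
  moreover have "last xs = xs ! n" "last ys = ys ! n" using \<open>length xs = Suc n\<close> \<open>length ys = Suc n\<close>
    by (metis last_conv_nth diff_Suc_1 list.size(3) nat.distinct(1))+
  ultimately have "last xs \<le> last ys" by simp
  then show "list_all2 (\<le>) [last xs] [last ys]" by simp
qed simp

lemma simpl_app: "simpl (cube n) (cube (Suc n)) (vmap (\<lambda>xs. xs @ [i]))"
  by (rule simpl_leaf) (auto intro: list_all2_appendI)

lemma simpl_butlast_bdry: "simpl (cyl_bdry n) (cube_bdry n) (vmap butlast)"
proof -
  have s: "simpl (cube (Suc n)) (cube n) (vmap butlast)" by (rule simpl_butlast)
  have "vmap butlast |`| c \<in> cube_bdry n" if c: "c \<in> cyl_bdry n" for c
  proof -
    have c1: "c \<in> cube (Suc n)" using c unfolding cyl_bdry_def by blast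
    then have "vmap butlast |`| c \<in> cube n" using s unfolding simpl_def by blast
    moreover obtain j b where jb: "j < n" "\<forall>x\<in>fset c. \<exists>xs. x = Leaf xs \<and> xs ! j = b"
      using c unfolding cyl_bdry_def by blast
    have "\<forall>u\<in>fset (vmap butlast |`| c). \<exists>xs. u = Leaf xs \<and> xs ! j = b"
    proof
      fix u assume "u \<in> fset (vmap butlast |`| c)"
      then obtain x where x: "x |\<in>| c" "u = vmap butlast x" by auto
      then have "x \<in> Leaf ` {xs. length xs = Suc n}" using c1 unfolding cube_def by auto
      then obtain xs where xs: "x = Leaf xs" "length xs = Suc n" by auto
      then have "xs ! j = b" using jb x(1) by auto
      then have "butlast xs ! j = b" using xs(2) jb(1) by (simp add: nth_butlast)
      then show "\<exists>xs. u = Leaf xs \<and> xs ! j = b" using x xs by auto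
    qed
    ultimately show ?thesis unfolding cube_bdry_def using jb(1) by blast
  qed
  moreover have "\<forall>c\<in>cyl_bdry n. \<forall>x y. x |\<in>| c \<longrightarrow> y |\<in>| c \<longrightarrow> hle x y \<longrightarrow> hle (vmap butlast x) (vmap butlast y)"
    using s unfolding simpl_def cyl_bdry_def by blast
  ultimately show ?thesis unfolding simpl_def by blast
qed

lemma vmap_comp: "vmap f (vmap g v) = vmap (f \<circ> g) v"
  by (induction v) (auto simp: fset.map_comp intro: fset.map_cong0)

lemma vmap_id: "vmap id v = v"
  by (induction v) (auto simp: fset.map_ident_strong)

lemma sdpt_Suc: "sdpt (Suc k) = Node {|sdpt k|}"
  by (simp add: sdpt_def)

lemma d_vertex_Suc: "d_vertex (Suc k) i = Node {|d_vertex k i|}"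
  by (simp add: d_vertex_def sdpt_Suc)

lemma vertex_in: "good S \<Longrightarrow> xs \<in> simplices S p \<Longrightarrow> v \<in> set xs \<Longrightarrow> {|v|} \<in> S"
  unfolding good_def simplices_def
  by (metis (no_types, lifting) bot_fset.rep_eq empty_iff fset_of_list_elem fsingleton_iff fsubsetI mem_Collect_eq)

lemma vmap_const_vertex:
  "{|v|} \<in> (sd ^^ k) (cube m) \<Longrightarrow> vmap (\<lambda>_. [i]) v = d_vertex k i"
proof (induction k arbitrary: v)
  case 0
  then have "v \<in> Leaf ` {xs. length xs = m}" by (simp add: cube_def)
  then show ?case by (auto simp: d_vertex_def sdpt_def)
next
  case (Suc k)
  then have "{|v|} \<in> sd ((sd ^^ k) (cube m))" by simp
  then have "v \<in> Node ` (sd ^^ k) (cube m)" unfolding sd_def by auto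
  then obtain A where A: "v = Node A" "A \<in> (sd ^^ k) (cube m)" by blast
  have g: "good ((sd ^^ k) (cube m))" by (rule good_sdk[OF good_cube])
  then have ne: "A \<noteq> {||}" using A(2) unfolding good_def by blast
  have "vmap (\<lambda>_. [i]) w = d_vertex k i" if "w |\<in>| A" for w
  proof (rule Suc.IH)
    show "{|w|} \<in> (sd ^^ k) (cube m)" using g A(2) that unfolding good_def by blast
  qed
  then have "vmap (\<lambda>_. [i]) |`| A = {|d_vertex k i|}" using ne by fastforce
  then show ?case using A(1) by (simp add: d_vertex_Suc)
qed

lemma lastv_pow_dvertex: "(lastv ^^ r) (d_vertex (s + r) i) = d_vertex s i"
proof (induction r)
  case 0 then show ?case by simp
next
  case (Suc r)
  have "(lastv ^^ Suc r) (d_vertex (s + Suc r) i) = (lastv ^^ r) (lastv (d_vertex (Suc (s + r)) i))"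
    by (simp only: funpow_Suc_right o_apply add_Suc_right)
  also have "\<dots> = d_vertex s i" by (simp only: d_vertex_Suc lastv_single Suc.IH)
  finally show ?case .
qed

lemma face_simplices:
  assumes "good S" "xs \<in> simplices S q" "monotone_map p q \<phi>"
  shows "map (\<lambda>j. xs ! \<phi> j) [0..<Suc p] \<in> simplices S p"
proof -
  have xs: "length xs = Suc q" "sorted_wrt hle xs" "fset_of_list xs \<in> S"
    using assms(2) by (auto simp: simplices_def)
  have ph: "\<And>i j. i \<le> j \<Longrightarrow> j \<le> p \<Longrightarrow> \<phi> i \<le> \<phi> j" "\<And>j. j \<le> p \<Longrightarrow> \<phi> j \<le> q"
    using assms(3) by (auto simp: monotone_map_def)
  let ?ys = "map (\<lambda>j. xs ! \<phi> j) [0..<Suc p]"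
  have "sorted_wrt hle ?ys"
  proof (rule sorted_wrt_iff_nth_less[THEN iffD2], intro allI impI)
    fix i j assume ij: "i < j" "j < length ?ys"
    then have jp: "j \<le> p" "i \<le> j" by auto
    have le: "\<phi> i \<le> \<phi> j" "\<phi> j < length xs" using ph(1)[OF jp(2,1)] ph(2)[OF jp(1)] xs(1) by auto
    show "hle (?ys ! i) (?ys ! j)"
    proof (cases "\<phi> i = \<phi> j")
      case True then show ?thesis using ij by (simp del: upt_Suc)
    next
      case False
      then have "\<phi> i < \<phi> j" using le by simp
      then have "hle (xs ! \<phi> i) (xs ! \<phi> j)" using xs(2) le(2) by (simp add: sorted_wrt_iff_nth_less)
      then show ?thesis using ij by (simp del: upt_Suc)
    qed
  qed
  moreover have "fset_of_list ?ys \<in> S"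
  proof -
    have "fset_of_list ?ys |\<subseteq>| fset_of_list xs"
    proof
      fix v assume "v |\<in>| fset_of_list ?ys"
      then obtain j where "j \<le> p" "v = xs ! \<phi> j" by (auto simp: fset_of_list_elem less_Suc_eq_le simp del: upt_Suc)
      moreover have "\<phi> j < length xs" using ph(2)[OF \<open>j \<le> p\<close>] xs(1) by simp
      ultimately show "v |\<in>| fset_of_list xs" by (simp add: fset_of_list_elem)
    qed
    moreover have "xs ! \<phi> 0 |\<in>| fset_of_list ?ys" by (simp add: fset_of_list_elem del: upt_Suc)
    then have "fset_of_list ?ys \<noteq> {||}" by auto
    ultimately show ?thesis using assms(1) xs(3) unfolding good_def by blast
  qed
  ultimately show ?thesis by (simp add: simplices_def del: upt_Suc)
qed



lemma keys_map_sub: "f 0 = 0 \<Longrightarrow> Poly_Mapping.keys (Poly_Mapping.map f F) \<subseteq> Poly_Mapping.keys F"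
  by (auto simp: in_keys_iff lookup_map0)

lemma keys_shift: "Poly_Mapping.keys (shift \<alpha> P) \<subseteq> {\<alpha> + \<gamma> |\<gamma>. \<gamma> \<in> Poly_Mapping.keys P}"
proof -
  have "Poly_Mapping.keys (shift \<alpha> P) \<subseteq> (\<Union>k\<in>Poly_Mapping.keys P. Poly_Mapping.keys (Poly_Mapping.single (\<alpha> + k) (Poly_Mapping.lookup P k)))"
    unfolding shift_def by (rule keys_lin)
  also have "\<dots> \<subseteq> {\<alpha> + \<gamma> |\<gamma>. \<gamma> \<in> Poly_Mapping.keys P}" by auto
  finally show ?thesis .
qed

lemma keys_flat:
  assumes "\<beta> \<in> Poly_Mapping.keys (flat G)"
  shows "\<exists>\<alpha>\<in>Poly_Mapping.keys G. \<exists>\<gamma>\<in>Poly_Mapping.keys (Poly_Mapping.lookup G \<alpha>). \<beta> = \<alpha> + \<gamma>"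
proof -
  have "Poly_Mapping.keys (flat G) \<subseteq> (\<Union>k\<in>Poly_Mapping.keys G. Poly_Mapping.keys (shift k (Poly_Mapping.lookup G k)))"
    unfolding flat_def by (rule keys_lin)
  then obtain \<alpha> where "\<alpha> \<in> Poly_Mapping.keys G" "\<beta> \<in> Poly_Mapping.keys (shift \<alpha> (Poly_Mapping.lookup G \<alpha>))"
    using assms by blast
  then show ?thesis using keys_shift by blast
qed

lemma map_face:
  assumes "length xs = Suc q" "monotone_map p q \<phi>"
  shows "map G (map (\<lambda>j. xs ! \<phi> j) [0..<Suc p]) = map (\<lambda>j. (map G xs) ! \<phi> j) [0..<Suc p]"
proof -
  have "\<phi> j < length xs" if "j \<in> set [0..<Suc p]" for j
    using that assms by (auto simp: monotone_map_def less_Suc_eq_le simp del: upt_Suc)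
  then show ?thesis by (simp del: upt_Suc)
qed

lemma smaps_nat:
  assumes "f \<in> smaps sc Dc S" "monotone_map p q \<phi>" "xs \<in> simplices S q"
  shows "f (map (\<lambda>j. xs ! \<phi> j) [0..<Suc p]) = sact sc \<phi> p (f xs)"
  using assms unfolding smaps_def by blast

theorem lemma3p7:
  fixes scA :: "'l::comm_ring_1 \<Rightarrow> 'a::ring \<Rightarrow> 'a"
    and scB :: "'l \<Rightarrow> 'b::ring \<Rightarrow> 'b"
    and n r s :: nat
    and H :: "'a \<Rightarrow> hf list \<Rightarrow> (hf list \<Rightarrow> 'b simplexalg) simplexalg"
  assumes "l_algebra scA" and "l_algebra scB"
    and "l_alg_hom scA (fscale (fscale scB))
           (smaps (fscale scB) (BS scB n r) ((sd ^^ s) (cube 1))) H"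
  shows "\<exists>Ht. l_alg_hom scA (fscale scB) (BSt scB n (r + s)) Ht \<and>
           (\<forall>i::bool. \<forall>x.
              pullback ((sd ^^ (r + s)) (cube n)) (vmap (\<lambda>xs. xs @ [i])) (Ht x)
            = pullback ((sd ^^ (r + s)) (cube n)) (lastv ^^ s) (eval_pt (H x) (d_vertex s i)))"
proof -
  have mB: "Modules.module scB" using assms(2) by (simp add: l_algebra_def)
  have mF: "Modules.module (fscale scB)" by (rule module_fscale[OF mB])
  have hH: "\<And>x. H x \<in> smaps (fscale scB) (BS scB n r) ((sd ^^ s) (cube 1))"
    "\<And>x y. H (x + y) = H x + H y" "\<And>x y. H (x * y) = H x * H y"
    "\<And>c x. H (scA c x) = fscale (fscale scB) c (H x)"
    using assms(3) unfolding l_alg_hom_def by blast+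
  define P1 where "P1 = (lastv ^^ s) \<circ> vmap butlast"
  define P2 where "P2 = (lastv ^^ r) \<circ> vmap (\<lambda>l. [last l])"
  define Sbig where "Sbig = (sd ^^ (r + s)) (cube (Suc n))"
  define Ht where "Ht x ys = (if ys \<in> all_simplices Sbig
      then flat (Poly_Mapping.map (\<lambda>c. c (map P1 ys)) (H x (map P2 ys))) else 0)" for x ys
  have gSbig: "good Sbig" unfolding Sbig_def by (rule good_sdk[OF good_cube])
  have sP1: "simpl Sbig ((sd ^^ r) (cube n)) P1"
    unfolding P1_def Sbig_def
    by (rule simpl_comp[OF simpl_vmap[OF simpl_butlast] simpl_lastv_pow[OF good_cube]])
  have sP1b: "simpl ((sd ^^ (r + s)) (cyl_bdry n)) ((sd ^^ r) (cube_bdry n)) P1"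
    unfolding P1_def
    by (rule simpl_comp[OF simpl_vmap[OF simpl_butlast_bdry] simpl_lastv_pow[OF good_cube_bdry]])
  have sP2: "simpl Sbig ((sd ^^ s) (cube 1)) P2"
  proof -
    have "simpl Sbig ((sd ^^ (s + r)) (cube 1)) (vmap (\<lambda>l. [last l]))"
      unfolding Sbig_def add.commute[of r s] by (rule simpl_vmap[OF simpl_lastl])
    then show ?thesis unfolding P2_def by (rule simpl_comp[OF _ simpl_lastv_pow[OF good_cube]])
  qed
  have BS_smaps: "c \<in> smaps scB UNIV ((sd ^^ r) (cube n))" if "c \<in> BS scB n r" for c
    using that by (simp add: BS_def rel_alg_def)
  have coef: "Poly_Mapping.lookup (H x vs) \<alpha> \<in> BS scB n r \<and> Poly_Mapping.keys \<alpha> \<subseteq> {1..q}"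
    if "vs \<in> simplices ((sd ^^ s) (cube 1)) q" "\<alpha> \<in> Poly_Mapping.keys (H x vs)" for x vs q \<alpha>
    using hH(1)[of x] that unfolding smaps_def dlevel_def by blast
  have mem: "Ht x \<in> BSt scB n (r + s)" for x
  proof -
    have lev: "Ht x ys \<in> dlevel UNIV q" if ys: "ys \<in> simplices Sbig q" for ys q
    proof -
      have yA: "ys \<in> all_simplices Sbig" using ys unfolding all_simplices_def by blast
      have us: "map P1 ys \<in> simplices ((sd ^^ r) (cube n)) q" by (rule simpl_simplices[OF sP1 ys])
      have vs: "map P2 ys \<in> simplices ((sd ^^ s) (cube 1)) q" by (rule simpl_simplices[OF sP2 ys])
      have "Poly_Mapping.keys \<beta> \<subseteq> {1..q}" if b: "\<beta> \<in> Poly_Mapping.keys (Ht x ys)" for \<beta>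
      proof -
        let ?G = "Poly_Mapping.map (\<lambda>c. c (map P1 ys)) (H x (map P2 ys))"
        obtain \<alpha> \<gamma> where ag: "\<alpha> \<in> Poly_Mapping.keys ?G" "\<gamma> \<in> Poly_Mapping.keys (Poly_Mapping.lookup ?G \<alpha>)" "\<beta> = \<alpha> + \<gamma>"
          using keys_flat[of \<beta> ?G] b yA by (auto simp: Ht_def)
        have a1: "\<alpha> \<in> Poly_Mapping.keys (H x (map P2 ys))" by (rule subsetD[OF keys_map_sub ag(1)]) simp
        have c: "Poly_Mapping.lookup (H x (map P2 ys)) \<alpha> \<in> BS scB n r" "Poly_Mapping.keys \<alpha> \<subseteq> {1..q}"
          using coef[OF vs a1] by auto
        have "Poly_Mapping.lookup ?G \<alpha> = Poly_Mapping.lookup (H x (map P2 ys)) \<alpha> (map P1 ys)"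
          by (simp add: lookup_map0)
        then have "Poly_Mapping.keys \<gamma> \<subseteq> {1..q}"
          using BS_smaps[OF c(1)] us ag(2) unfolding smaps_def dlevel_def by auto
        then show ?thesis using c(2) ag(3) keys_add[of \<alpha> \<gamma>] by auto
      qed
      then show ?thesis by (simp add: dlevel_def)
    qed
    have nat: "Ht x (map (\<lambda>j. ys ! \<phi> j) [0..<Suc p]) = sact scB \<phi> p (Ht x ys)"
      if ph: "monotone_map p q \<phi>" and ys: "ys \<in> simplices Sbig q" for p q \<phi> ys
    proof -
      let ?ys' = "map (\<lambda>j. ys ! \<phi> j) [0..<Suc p]"
      have len: "length ys = Suc q" using ys by (simp add: simplices_def)
      have yA: "ys \<in> all_simplices Sbig" using ys unfolding all_simplices_def by blast
      have ys': "?ys' \<in> all_simplices Sbig" using face_simplices[OF gSbig ys ph] unfolding all_simplices_def by blast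
      have us: "map P1 ys \<in> simplices ((sd ^^ r) (cube n)) q" by (rule simpl_simplices[OF sP1 ys])
      have vs: "map P2 ys \<in> simplices ((sd ^^ s) (cube 1)) q" by (rule simpl_simplices[OF sP2 ys])
      have e1: "map P1 ?ys' = map (\<lambda>j. (map P1 ys) ! \<phi> j) [0..<Suc p]" by (rule map_face[OF len ph])
      have e2: "map P2 ?ys' = map (\<lambda>j. (map P2 ys) ! \<phi> j) [0..<Suc p]" by (rule map_face[OF len ph])
      have hn: "H x (map P2 ?ys') = sact (fscale scB) \<phi> p (H x (map P2 ys))"
        unfolding e2 by (rule smaps_nat[OF hH(1) ph vs])
      have cn: "Poly_Mapping.lookup (H x (map P2 ys)) \<alpha> (map P1 ?ys') = sact scB \<phi> p (Poly_Mapping.lookup (H x (map P2 ys)) \<alpha> (map P1 ys))"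
        if "\<alpha> \<in> Poly_Mapping.keys (H x (map P2 ys))" for \<alpha>
      proof -
        have "Poly_Mapping.lookup (H x (map P2 ys)) \<alpha> \<in> smaps scB UNIV ((sd ^^ r) (cube n))"
          using coef[OF vs that] BS_smaps by blast
        then show ?thesis unfolding e1 by (rule smaps_nat[OF _ ph us])
      qed
      show ?thesis
        unfolding Ht_def using yA ys' hn natural_flat[OF mB cn] by simp
    qed
    have van: "Ht x ys = 0" if ys: "ys \<in> all_simplices ((sd ^^ (r + s)) (cyl_bdry n))" for ys
    proof (cases "ys \<in> all_simplices Sbig")
      case True
      then obtain q where q: "ys \<in> simplices Sbig q" unfolding all_simplices_def by blast
      have vs: "map P2 ys \<in> simplices ((sd ^^ s) (cube 1)) q" by (rule simpl_simplices[OF sP2 q])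
      have ub: "map P1 ys \<in> all_simplices ((sd ^^ r) (cube_bdry n))" by (rule simpl_all[OF sP1b ys])
      have "Poly_Mapping.map (\<lambda>c. c (map P1 ys)) (H x (map P2 ys)) = 0"
        unfolding map_eq_zero_iff
      proof
        fix \<alpha> assume "\<alpha> \<in> Poly_Mapping.keys (H x (map P2 ys))"
        then have "Poly_Mapping.lookup (H x (map P2 ys)) \<alpha> \<in> BS scB n r" using coef[OF vs] by blast
        then show "Poly_Mapping.lookup (H x (map P2 ys)) \<alpha> (map P1 ys) = 0"
          using ub unfolding BS_def rel_alg_def by blast
      qed
      then show ?thesis unfolding Ht_def using True additive.zero[OF additive_flat] by simp
    qed (simp add: Ht_def)
    show ?thesis
      unfolding BSt_def rel_alg_def smaps_def
      using lev nat van by (auto simp: Ht_def Sbig_def)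
  qed
  have hom: "l_alg_hom scA (fscale scB) (BSt scB n (r + s)) Ht"
    unfolding l_alg_hom_def
  proof (intro conjI allI)
    fix x show "Ht x \<in> BSt scB n (r + s)" by (rule mem)
  next
    fix x y show "Ht (x + y) = Ht x + Ht y"
      by (rule ext) (simp add: Ht_def hH(2) additive.add[OF additive_map[OF additive_ev]] additive.add[OF additive_flat])
  next
    fix x y
    have ev: "(\<lambda>c::hf list \<Rightarrow> 'b simplexalg. c u) (a * b) = a u * b u" for u a b by simp
    show "Ht (x * y) = Ht x * Ht y"
      by (rule ext) (simp add: Ht_def hH(3) map_mult_hom[OF additive_ev] flat_mult)
  next
    fix c x show "Ht (scA c x) = fscale scB c (Ht x)"
      by (rule ext) (simp add: Ht_def hH(4) fscale_def map_ev_pscale[OF mB] flat_pscale[OF mB] pscale_zero[OF mB])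
  qed
  have bd: "pullback ((sd ^^ (r + s)) (cube n)) (vmap (\<lambda>xs. xs @ [i])) (Ht x)
            = pullback ((sd ^^ (r + s)) (cube n)) (lastv ^^ s) (eval_pt (H x) (d_vertex s i))" for i x
  proof (rule ext)
    fix ys
    let ?Sn = "(sd ^^ (r + s)) (cube n)"
    show "pullback ?Sn (vmap (\<lambda>xs. xs @ [i])) (Ht x) ys = pullback ?Sn (lastv ^^ s) (eval_pt (H x) (d_vertex s i)) ys"
    proof (cases "ys \<in> all_simplices ?Sn")
      case False then show ?thesis by (simp add: pullback_def)
    next
      case True
      then obtain p where p: "ys \<in> simplices ?Sn p" unfolding all_simplices_def by blast
      have gSn: "good ?Sn" by (rule good_sdk[OF good_cube])
      let ?ys' = "map (vmap (\<lambda>xs. xs @ [i])) ys"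
      let ?d = "d_vertex s i"
      have ys': "?ys' \<in> simplices Sbig p" unfolding Sbig_def by (rule simpl_simplices[OF simpl_vmap[OF simpl_app] p])
      then have ys'A: "?ys' \<in> all_simplices Sbig" unfolding all_simplices_def by blast
      have len: "length ys = Suc p" using p by (simp add: simplices_def)
      have e1: "map P1 ?ys' = map (lastv ^^ s) ys"
      proof -
        have "butlast \<circ> (\<lambda>xs. xs @ [i]) = id" by (rule ext) simp
        then show ?thesis by (simp add: P1_def vmap_comp vmap_id)
      qed
      have e2v: "P2 (vmap (\<lambda>xs. xs @ [i]) v) = ?d" if "v \<in> set ys" for v
      proof -
        have "(\<lambda>l. [last l]) \<circ> (\<lambda>xs. xs @ [i]) = (\<lambda>_. [i])" by (rule ext) simp
        then have "P2 (vmap (\<lambda>xs. xs @ [i]) v) = (lastv ^^ r) (vmap (\<lambda>_. [i]) v)"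
          by (simp add: P2_def vmap_comp)
        also have "\<dots> = (lastv ^^ r) (d_vertex (s + r) i)"
          using vmap_const_vertex[OF vertex_in[OF gSn p that]] by (simp add: add.commute)
        also have "\<dots> = ?d" by (rule lastv_pow_dvertex)
        finally show ?thesis .
      qed
      have e2: "map P2 ?ys' = map (\<lambda>j. [?d] ! ((\<lambda>_. 0) j)) [0..<Suc p]"
      proof -
        have "map P2 ?ys' = map (\<lambda>_. ?d) ys" using e2v by simp
        then show ?thesis using len by (simp add: map_replicate_const del: upt_Suc)
      qed
      have vs': "map P2 ?ys' \<in> simplices ((sd ^^ s) (cube 1)) p" by (rule simpl_simplices[OF sP2 ys'])
      have "?d \<in> set (map P2 ?ys')" unfolding e2 by (auto simp: image_iff simp del: upt_Suc)
      then have dv: "{|?d|} \<in> (sd ^^ s) (cube 1)"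
        by (rule vertex_in[OF good_sdk[OF good_cube] vs'])
      have d0: "[?d] \<in> simplices ((sd ^^ s) (cube 1)) 0"
        using dv by (simp add: simplices_def)
      have mono0: "monotone_map p 0 (\<lambda>_. 0)" by (simp add: monotone_map_def)
      have hv: "H x (map P2 ?ys') = sact (fscale scB) (\<lambda>_. 0) p (H x [?d])"
        unfolding e2 by (rule smaps_nat[OF hH(1) mono0 d0])
      define e where "e = eval_pt (H x) ?d"
      have single0: "H x [?d] = Poly_Mapping.single 0 e"
      proof (rule poly_mapping_eqI)
        fix k
        show "Poly_Mapping.lookup (H x [?d]) k = Poly_Mapping.lookup (Poly_Mapping.single 0 e) k"
        proof (cases "k \<in> Poly_Mapping.keys (H x [?d])")
          case True
          then have "Poly_Mapping.keys k \<subseteq> {1..0}" using coef[OF d0] by blast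
          then have "k = 0" by simp
          then show ?thesis by (simp add: e_def eval_pt_def)
        next
          case False
          then have "Poly_Mapping.lookup (H x [?d]) k = 0" by (simp add: in_keys_iff)
          moreover have "k = 0 \<Longrightarrow> e = 0" using False by (simp add: e_def eval_pt_def in_keys_iff)
          ultimately show ?thesis by (auto simp: lookup_single when_def)
        qed
      qed
      have hs: "H x (map P2 ?ys') = Poly_Mapping.single 0 e"
        unfolding hv single0 sact_single[OF mF] smon_zero single_one[symmetric] tens_single[OF mF]
        by (simp add: module.scale_one[OF mF])
      have "Ht x ?ys' = flat (Poly_Mapping.map (\<lambda>c. c (map P1 ?ys')) (H x (map P2 ?ys')))"
        using ys'A unfolding Ht_def by (rule if_P)
      also have "\<dots> = e (map (lastv ^^ s) ys)"
        unfolding e1 hs by (simp add: shift_0)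
      finally have "Ht x ?ys' = e (map (lastv ^^ s) ys)" .
      then show ?thesis using True by (simp add: pullback_def e_def)
    qed
  qed
  show ?thesis using hom bd by blast
qed


end
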